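(* Let $X_1,X_2,\dots$ be independent random variables such that $\Pr\{0\le X_i\le1\}=1$ and $\mathbb{E}[X_i]=\mu_i$ for $i\in\mathbb{N}$. Define $S_n=\sum_{i=1}^nX_i$, $\overline{\mu}_n=\frac1n\sum_{i=1}^n\mu_i$, and $\mathcal{V}(s,n)=n\ln(\overline{\mu}_ne^s+1-\overline{\mu}_n)$ for $s\in\mathbb{R}$, $n\in\mathbb{N}$. Let $m$ be a positive integer with $0<\overline{\mu}_m<1$. Then for all $\theta\in(0,1)$, \[ \Pr\Big\{\sup_{n\in\mathbb{N}}\big[\zeta(S_n-m\theta)-\mathcal{V}(\zeta,n)+\mathcal{V}(\zeta,m)\big]\ge0\Big\}\le\Big[\exp\Big(\theta\ln\frac{\overline{\mu}_m}{\theta}+(1-\theta)\ln\frac{1-\overline{\mu}_m}{1-\theta}\Big)\Big]^m, \] where $\zeta=\ln\frac{\theta(1-\overline{\mu}_m)}{\overline{\mu}_m(1-\theta)}$.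
   Context: $\mathbb{N}$ denotes the set of positive integers. *)

theory Defs
  imports "HOL-Probability.Probability"
begin

definition mu_bar :: "(nat \<Rightarrow> real) \<Rightarrow> nat \<Rightarrow> real" where
  "mu_bar \<mu> n = (\<Sum>i=1..n. \<mu> i) / real n"

definition calV :: "(nat \<Rightarrow> real) \<Rightarrow> real \<Rightarrow> nat \<Rightarrow> real" where
  "calV \<mu> s n = real n * ln (mu_bar \<mu> n * exp s + 1 - mu_bar \<mu> n)"

end

theory Submission
  imports Defs
begin

definition ww :: "real \<Rightarrow> (nat \<Rightarrow> real) \<Rightarrow> nat \<Rightarrow> (nat \<Rightarrow> real) \<Rightarrow> real" where
  "ww z v n x = exp (z * (\<Sum>i=1..n. x i) - v n)"

definition tt :: "real \<Rightarrow> (nat \<Rightarrow> real) \<Rightarrow> real \<Rightarrow> nat \<Rightarrow> (nat \<Rightarrow> real) \<Rightarrow> bool" where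
  "tt z v b k x = (\<exists>n\<in>{..k}. b \<le> ww z v n x)"

primrec yy :: "real \<Rightarrow> (nat \<Rightarrow> real) \<Rightarrow> real \<Rightarrow> nat \<Rightarrow> (nat \<Rightarrow> real) \<Rightarrow> real" where
  "yy z v b 0 x = ww z v 0 x"
| "yy z v b (Suc k) x = (if tt z v b k x then yy z v b k x else ww z v (Suc k) x)"

lemma ww_local: "(\<And>i. i \<in> {1..n} \<Longrightarrow> x i = x' i) \<Longrightarrow> ww z v n x = ww z v n x'"
  unfolding ww_def by (metis (no_types, lifting) sum.cong)

lemma tt_local: "(\<And>i. i \<in> {1..k} \<Longrightarrow> x i = x' i) \<Longrightarrow> tt z v b k x = tt z v b k x'"
  unfolding tt_def by (intro bex_cong refl ww_local[THEN arg_cong[where f="\<lambda>t. b \<le> t"]]) auto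

lemma yy_local: "(\<And>i. i \<in> {1..k} \<Longrightarrow> x i = x' i) \<Longrightarrow> yy z v b k x = yy z v b k x'"
proof (induction k)
  case 0 then show ?case by (simp add: ww_def)
next
  case (Suc k)
  have "tt z v b k x = tt z v b k x'" by (rule tt_local) (use Suc.prems in auto)
  moreover have "yy z v b k x = yy z v b k x'" by (rule Suc.IH) (use Suc.prems in auto)
  moreover have "ww z v (Suc k) x = ww z v (Suc k) x'" by (rule ww_local) (use Suc.prems in auto)
  ultimately show ?case by simp
qed

lemma yy_nonneg: "0 \<le> yy z v b k x"
  by (induction k) (auto simp: ww_def)

lemma yy_not_tt: "\<not> tt z v b k x \<Longrightarrow> yy z v b k x = ww z v k x"
  by (induction k) (auto simp: tt_def)

lemma yy_tt: "tt z v b k x \<Longrightarrow> b \<le> yy z v b k x"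
proof (induction k)
  case 0 then show ?case by (simp add: tt_def)
next
  case (Suc k)
  show ?case
  proof (cases "tt z v b k x")
    case True then show ?thesis using Suc by simp
  next
    case False
    then have "b \<le> ww z v (Suc k) x" using Suc.prems by (auto simp: tt_def le_Suc_eq)
    then show ?thesis using False by simp
  qed
qed

lemma ww_meas: assumes "{1..n} \<subseteq> K" shows "ww z v n \<in> borel_measurable (PiM K (\<lambda>_. borel))"
proof -
  have [measurable]: "(\<lambda>x::nat\<Rightarrow>real. \<Sum>i\<in>{1..n}. x i) \<in> borel_measurable (PiM K (\<lambda>_. borel))"
    by (rule borel_measurable_sum[where f="\<lambda>i x. x i"], rule measurable_component_singleton) (use assms in auto)
  show ?thesis unfolding ww_def by measurable
qed

lemma tt_meas: "{1..k} \<subseteq> K \<Longrightarrow> Measurable.pred (PiM K (\<lambda>_. borel)) (tt z v b k)"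
  unfolding tt_def
  apply (intro pred_intros_finite finite_atMost)
  unfolding pred_def
  apply (rule borel_measurable_le)
   apply simp
  apply (rule ww_meas, force)
  done

lemma yy_meas: "{1..k} \<subseteq> K \<Longrightarrow> yy z v b k \<in> borel_measurable (PiM K (\<lambda>_. borel))"
proof (induction k)
  case 0 then show ?case by (simp add: ww_def)
next
  case (Suc k)
  have "{1..k} \<subseteq> K" using Suc.prems by auto
  then show ?case using Suc tt_meas ww_meas by (simp add: measurable_If)
qed


lemma (in prob_space) indep_var_nn_integral':
  assumes "indep_var borel X1 borel X2" "\<And>\<omega>. 0 \<le> X1 \<omega>" "\<And>\<omega>. 0 \<le> X2 \<omega>"
  shows "(\<integral>\<^sup>+\<omega>. ennreal (X1 \<omega> * X2 \<omega>) \<partial>M) = (\<integral>\<^sup>+\<omega>. ennreal (X1 \<omega>) \<partial>M) * (\<integral>\<^sup>+\<omega>. ennreal (X2 \<omega>) \<partial>M)"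
proof -
  have **: "(\<lambda>_. borel) = case_bool borel borel" by (rule ext) (simp split: bool.split)
  have "indep_var borel (ennreal \<circ> X1) borel (ennreal \<circ> X2)"
    by (rule indep_var_compose[OF assms(1)]) auto
  then have "indep_vars (\<lambda>_. borel) (case_bool (ennreal \<circ> X1) (ennreal \<circ> X2)) UNIV"
    unfolding indep_var_def ** .
  then have "(\<integral>\<^sup>+\<omega>. (\<Prod>i\<in>UNIV. case_bool (ennreal \<circ> X1) (ennreal \<circ> X2) i \<omega>) \<partial>M)
     = (\<Prod>i\<in>UNIV. \<integral>\<^sup>+\<omega>. case_bool (ennreal \<circ> X1) (ennreal \<circ> X2) i \<omega> \<partial>M)"
    using indep_vars_nn_integral[of "UNIV::bool set" "case_bool (ennreal \<circ> X1) (ennreal \<circ> X2)"] by auto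
  then show ?thesis using assms(2,3) by (simp add: UNIV_bool mult.commute ennreal_mult comp_def)
qed

lemma (in prob_space) core:
  fixes X :: "nat \<Rightarrow> 'a \<Rightarrow> real" and v :: "nat \<Rightarrow> real"
  assumes ind: "indep_vars (\<lambda>_. borel) X {1..}"
    and v0: "v 0 = 0"
    and mgf: "\<And>k. (\<integral>\<^sup>+\<omega>. ennreal (exp (z * X (Suc k) \<omega>)) \<partial>M) \<le> ennreal (exp (v (Suc k) - v k))"
    and b: "0 < b"
  shows "b * prob {\<omega> \<in> space M. tt z v b N (\<lambda>i. X i \<omega>)} \<le> 1"
proof -
  define R where "R K \<omega> = restrict (\<lambda>i. X i \<omega>) K" for K \<omega>
  have Xm: "X i \<in> borel_measurable M" if "i \<in> {1..}" for i
    using ind that unfolding indep_vars_def by auto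
  have Rm: "R K \<in> measurable M (PiM K (\<lambda>_. borel))" if "K \<subseteq> {1..}" for K
    unfolding R_def using that Xm by (intro measurable_restrict) auto
  have Yeq: "(\<lambda>\<omega>. yy z v b k (\<lambda>i. X i \<omega>)) = (\<lambda>\<omega>. yy z v b k (R {1..k} \<omega>))" for k
    by (rule ext, rule yy_local) (auto simp: R_def)
  have Ym: "(\<lambda>\<omega>. yy z v b k (\<lambda>i. X i \<omega>)) \<in> borel_measurable M" for k
    unfolding Yeq by (rule measurable_compose[OF Rm yy_meas]) auto
  have Teq: "(\<lambda>\<omega>. tt z v b k (\<lambda>i. X i \<omega>)) = (\<lambda>\<omega>. tt z v b k (R {1..k} \<omega>))" for k
    by (rule ext, rule tt_local) (auto simp: R_def)
  have Tm: "Measurable.pred M (\<lambda>\<omega>. tt z v b k (\<lambda>i. X i \<omega>))" for k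
    unfolding Teq by (rule measurable_compose[OF Rm tt_meas]) auto
  have Weq: "(\<lambda>\<omega>. ww z v k (\<lambda>i. X i \<omega>)) = (\<lambda>\<omega>. ww z v k (R {1..k} \<omega>))" for k
    by (rule ext, rule ww_local) (auto simp: R_def)
  have Wm: "(\<lambda>\<omega>. ww z v k (\<lambda>i. X i \<omega>)) \<in> borel_measurable M" for k
    unfolding Weq by (rule measurable_compose[OF Rm ww_meas]) auto
  have step: "(\<integral>\<^sup>+\<omega>. ennreal (yy z v b (Suc k) (\<lambda>i. X i \<omega>)) \<partial>M)
      \<le> (\<integral>\<^sup>+\<omega>. ennreal (yy z v b k (\<lambda>i. X i \<omega>)) \<partial>M)" for k
  proof -
    define T where "T \<omega> = tt z v b k (\<lambda>i. X i \<omega>)" for \<omega>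
    define Y where "Y \<omega> = yy z v b k (\<lambda>i. X i \<omega>)" for \<omega>
    define G where "G \<omega> = (if T \<omega> then 0 else ww z v k (\<lambda>i. X i \<omega>))" for \<omega>
    define H where "H \<omega> = exp (z * X (Suc k) \<omega>)" for \<omega>
    define c where "c = exp (v k - v (Suc k))"
    have [measurable]: "Measurable.pred M T" unfolding T_def by (rule Tm)
    have [measurable]: "Y \<in> borel_measurable M" unfolding Y_def by (rule Ym)
    have [measurable]: "(\<lambda>\<omega>. ww z v k (\<lambda>i. X i \<omega>)) \<in> borel_measurable M" by (rule Wm)
    have [measurable]: "X (Suc k) \<in> borel_measurable M" by (rule Xm) auto
    have G0: "0 \<le> G \<omega>" for \<omega> by (auto simp: G_def ww_def)
    have H0: "0 \<le> H \<omega>" for \<omega> by (auto simp: H_def)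
    have wsuc: "ww z v (Suc k) x = ww z v k x * exp (z * x (Suc k)) * c" for x
    proof -
      have "ww z v k x * exp (z * x (Suc k)) * c
          = exp ((z * (\<Sum>i=1..k. x i) - v k) + z * x (Suc k) + (v k - v (Suc k)))"
        unfolding ww_def c_def by (simp only: exp_add)
      also have "\<dots> = ww z v (Suc k) x" unfolding ww_def by (simp add: algebra_simps)
      finally show ?thesis by simp
    qed
    have pt1: "yy z v b (Suc k) (\<lambda>i. X i \<omega>) = (if T \<omega> then Y \<omega> else 0) + G \<omega> * H \<omega> * c" for \<omega>
      by (simp add: T_def Y_def G_def H_def wsuc)
    have pt2: "Y \<omega> = (if T \<omega> then Y \<omega> else 0) + G \<omega>" for \<omega>
      by (simp add: T_def Y_def G_def yy_not_tt)
    have indep: "indep_var borel G borel H"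
    proof -
      have "indep_var (PiM {1..k} (\<lambda>_. borel)) (R {1..k}) (PiM {Suc k} (\<lambda>_. borel)) (R {Suc k})"
        unfolding R_def by (rule indep_var_restrict[OF ind]) auto
      then have "indep_var borel ((\<lambda>x. if tt z v b k x then 0 else ww z v k x) \<circ> R {1..k})
          borel ((\<lambda>x. exp (z * x (Suc k))) \<circ> R {Suc k})"
      proof (rule indep_var_compose)
        show "(\<lambda>x. if tt z v b k x then 0 else ww z v k x) \<in> borel_measurable (PiM {1..k} (\<lambda>_. borel))"
          using tt_meas[of k "{1..k}"] ww_meas[of k "{1..k}"] by (intro measurable_If) auto
        show "(\<lambda>x. exp (z * x (Suc k))) \<in> borel_measurable (PiM {Suc k} (\<lambda>_. borel))"
          by measurable
      qed
      moreover have "(\<lambda>x. if tt z v b k x then 0 else ww z v k x) \<circ> R {1..k} = G"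
        unfolding G_def T_def comp_def using Teq[of k] Weq[of k] by (auto simp: fun_eq_iff dest: fun_cong)
      moreover have "(\<lambda>x. exp (z * x (Suc k))) \<circ> R {Suc k} = H"
        unfolding H_def R_def by auto
      ultimately show ?thesis by simp
    qed
    have [measurable]: "G \<in> borel_measurable M" unfolding G_def by measurable
    have [measurable]: "H \<in> borel_measurable M" unfolding H_def by measurable
    have "(\<integral>\<^sup>+\<omega>. ennreal (yy z v b (Suc k) (\<lambda>i. X i \<omega>)) \<partial>M)
        = (\<integral>\<^sup>+\<omega>. ennreal (if T \<omega> then Y \<omega> else 0) + ennreal (G \<omega> * H \<omega>) * ennreal c \<partial>M)"
      unfolding pt1 using G0 H0 yy_nonneg
      by (intro nn_integral_cong) (auto simp: Y_def c_def ennreal_plus ennreal_mult)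
    also have "\<dots> = (\<integral>\<^sup>+\<omega>. ennreal (if T \<omega> then Y \<omega> else 0) \<partial>M) + (\<integral>\<^sup>+\<omega>. ennreal (G \<omega> * H \<omega>) \<partial>M) * ennreal c"
      by (subst nn_integral_add) (auto simp: nn_integral_multc)
    also have "(\<integral>\<^sup>+\<omega>. ennreal (G \<omega> * H \<omega>) \<partial>M) = (\<integral>\<^sup>+\<omega>. ennreal (G \<omega>) \<partial>M) * (\<integral>\<^sup>+\<omega>. ennreal (H \<omega>) \<partial>M)"
      by (rule indep_var_nn_integral'[OF indep G0 H0])
    also have "\<dots> * ennreal c \<le> (\<integral>\<^sup>+\<omega>. ennreal (G \<omega>) \<partial>M) * (ennreal (exp (v (Suc k) - v k)) * ennreal c)"
      unfolding mult.assoc using mgf[of k] unfolding H_def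
      by (intro mult_left_mono mult_right_mono) auto
    also have "ennreal (exp (v (Suc k) - v k)) * ennreal c = 1"
      unfolding c_def by (simp flip: ennreal_mult exp_add)
    also have "(\<integral>\<^sup>+\<omega>. ennreal (if T \<omega> then Y \<omega> else 0) \<partial>M) + (\<integral>\<^sup>+\<omega>. ennreal (G \<omega>) \<partial>M) * 1
        = (\<integral>\<^sup>+\<omega>. ennreal (if T \<omega> then Y \<omega> else 0) + ennreal (G \<omega>) \<partial>M)"
      by (subst nn_integral_add) auto
    also have "\<dots> = (\<integral>\<^sup>+\<omega>. ennreal (Y \<omega>) \<partial>M)"
      using G0 yy_nonneg by (intro nn_integral_cong) (auto simp: Y_def G_def T_def yy_not_tt)
    finally show ?thesis unfolding Y_def by (simp add: add_left_mono)
  qed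
  have bound: "(\<integral>\<^sup>+\<omega>. ennreal (yy z v b k (\<lambda>i. X i \<omega>)) \<partial>M) \<le> 1" for k
  proof (induction k)
    case 0
    have "(\<integral>\<^sup>+\<omega>. ennreal (yy z v b 0 (\<lambda>i. X i \<omega>)) \<partial>M) = (\<integral>\<^sup>+\<omega>. 1 \<partial>M)"
      by (simp add: ww_def v0)
    then show ?case by (simp add: emeasure_space_1)
  next
    case (Suc k) then show ?case using step[of k] by (rule_tac order_trans) auto
  qed
  define A where "A = {\<omega> \<in> space M. tt z v b N (\<lambda>i. X i \<omega>)}"
  have [measurable]: "A \<in> sets M" unfolding A_def using Tm[of N] by (simp add: pred_def)
  have "ennreal b * emeasure M A = (\<integral>\<^sup>+\<omega>. ennreal b * indicator A \<omega> \<partial>M)"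
    by (simp add: nn_integral_cmult_indicator)
  also have "\<dots> \<le> (\<integral>\<^sup>+\<omega>. ennreal (yy z v b N (\<lambda>i. X i \<omega>)) \<partial>M)"
    by (intro nn_integral_mono) (auto simp: A_def indicator_def yy_tt intro!: ennreal_leI)
  also have "\<dots> \<le> 1" by (rule bound)
  finally have "ennreal (b * prob A) \<le> ennreal 1"
    using b by (simp add: emeasure_eq_measure ennreal_mult)
  then show ?thesis unfolding A_def[symmetric] by (subst (asm) ennreal_le_iff) auto
qed

lemma pos_mix: "0 \<le> (p::real) \<Longrightarrow> p \<le> 1 \<Longrightarrow> 0 < e \<Longrightarrow> 0 < p * e + 1 - p"
  by (smt (verit) mult_nonneg_nonneg mult_less_cancel_right1 mult_le_cancel_right1)

lemma mu_bar_range: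
  assumes "\<And>i. i \<ge> 1 \<Longrightarrow> 0 \<le> \<mu> i \<and> \<mu> i \<le> 1"
  shows "0 \<le> mu_bar \<mu> k \<and> mu_bar \<mu> k \<le> 1"
proof -
  have "0 \<le> (\<Sum>i=1..k. \<mu> i)" using assms by (intro sum_nonneg) auto
  moreover have "(\<Sum>i=1..k. \<mu> i) \<le> (\<Sum>i=1..k. 1)" using assms by (intro sum_mono) auto
  ultimately show ?thesis unfolding mu_bar_def by (auto simp: divide_le_eq)
qed

lemma k_q: "real k * (mu_bar \<mu> k * e + 1 - mu_bar \<mu> k) = (\<Sum>i=1..k. \<mu> i) * e + real k - (\<Sum>i=1..k. \<mu> i)"
  by (cases "k = 0") (auto simp: mu_bar_def field_simps)

lemma calV_step:
  assumes "\<And>i. i \<ge> 1 \<Longrightarrow> 0 \<le> \<mu> i \<and> \<mu> i \<le> 1"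
  shows "calV \<mu> z k + ln (\<mu> (Suc k) * exp z + 1 - \<mu> (Suc k)) \<le> calV \<mu> z (Suc k)"
proof -
  define q where "q = mu_bar \<mu> k * exp z + 1 - mu_bar \<mu> k"
  define p where "p = mu_bar \<mu> (Suc k) * exp z + 1 - mu_bar \<mu> (Suc k)"
  define r where "r = \<mu> (Suc k) * exp z + 1 - \<mu> (Suc k)"
  have q: "0 < q" unfolding q_def using mu_bar_range[OF assms] by (intro pos_mix) auto
  have p: "0 < p" unfolding p_def using mu_bar_range[OF assms] by (intro pos_mix) auto
  have r: "0 < r" unfolding r_def using assms[of "Suc k"] by (intro pos_mix) auto
  have key: "real k * q + r = (real k + 1) * p"
    using k_q[of k \<mu> "exp z"] k_q[of "Suc k" \<mu> "exp z"]
    unfolding q_def p_def r_def by (simp add: algebra_simps)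
  have "real k * ln (q / p) \<le> real k * (q / p - 1)"
    using p q by (intro mult_left_mono ln_le_minus_one) auto
  moreover have "ln (r / p) \<le> r / p - 1" using p r by (intro ln_le_minus_one) auto
  moreover have "real k * (q / p - 1) + (r / p - 1) = (real k * q + r) / p - (real k + 1)"
    using p by (simp add: field_simps)
  moreover have "(real k * q + r) / p = real k + 1" using key p by simp
  ultimately have "real k * ln (q / p) + ln (r / p) \<le> 0" by linarith
  then have "real k * ln q + ln r \<le> (real k + 1) * ln p"
    using p q r by (simp add: ln_div algebra_simps)
  then show ?thesis unfolding calV_def q_def[symmetric] p_def[symmetric] r_def[symmetric]
    by (simp add: algebra_simps)
qed

lemma exp_mix_bound:
  fixes x z :: real assumes "0 \<le> x" "x \<le> 1"
  shows "exp (z * x) \<le> 1 + x * (exp z - 1)"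
proof -
  have "exp ((1 - x) *\<^sub>R 0 + x *\<^sub>R z) \<le> (1 - x) * exp 0 + x * exp z"
    using assms by (intro convex_onD[OF exp_convex]) auto
  then show ?thesis by (simp add: algebra_simps)
qed

theorem theorem15:
  fixes M :: "'a measure" and X :: "nat \<Rightarrow> 'a \<Rightarrow> real" and m :: nat and \<theta> :: real
  assumes "prob_space M"
    and "prob_space.indep_vars M (\<lambda>_. borel) X {1..}"
    and "\<And>i. i \<ge> 1 \<Longrightarrow> AE \<omega> in M. 0 \<le> X i \<omega> \<and> X i \<omega> \<le> 1"
    and "m \<ge> 1"
    and "0 < mu_bar (\<lambda>i. prob_space.expectation M (X i)) m"
    and "mu_bar (\<lambda>i. prob_space.expectation M (X i)) m < 1"
    and "0 < \<theta>" and "\<theta> < 1"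
  shows "let \<mu> = (\<lambda>i. prob_space.expectation M (X i));
             mb = mu_bar \<mu> m;
             \<zeta> = ln (\<theta> * (1 - mb) / (mb * (1 - \<theta>)));
             S = (\<lambda>n \<omega>. \<Sum>i=1..n. X i \<omega>)
         in measure M {\<omega> \<in> space M.
               (SUP n\<in>{1..}. ereal (\<zeta> * (S n \<omega> - real m * \<theta>) - calV \<mu> \<zeta> n + calV \<mu> \<zeta> m)) \<ge> 0}
            \<le> (exp (\<theta> * ln (mb / \<theta>) + (1 - \<theta>) * ln ((1 - mb) / (1 - \<theta>)))) ^ m"
proof -
  interpret prob_space M by fact
  note ind = assms(2)
  define \<mu> where "\<mu> = (\<lambda>i. expectation (X i))"
  define mb where "mb = mu_bar \<mu> m"
  define \<zeta> where "\<zeta> = ln (\<theta> * (1 - mb) / (mb * (1 - \<theta>)))"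
  define v where "v = calV \<mu> \<zeta>"
  define E where "E = {\<omega> \<in> space M.
               (SUP n\<in>{1..}. ereal (\<zeta> * ((\<Sum>i=1..n. X i \<omega>) - real m * \<theta>) - v n + v m)) \<ge> 0}"
  define c where "c = exp (\<zeta> * real m * \<theta> - v m)"
  have mb0: "0 < mb" and mb1: "mb < 1" using assms(5,6) by (auto simp: mb_def \<mu>_def)
  have th0: "0 < \<theta>" and th1: "\<theta> < 1" by fact+
  have Xm: "X i \<in> borel_measurable M" if "i \<ge> 1" for i
    using ind that unfolding indep_vars_def by auto
  have Xint: "integrable M (X i)" if "i \<ge> 1" for i
  proof (rule integrable_const_bound[where B=1])
    show "AE x in M. norm (X i x) \<le> 1" using assms(3)[OF that] by eventually_elim auto
  qed (rule Xm[OF that])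
  have mu_range: "0 \<le> \<mu> i \<and> \<mu> i \<le> 1" if "i \<ge> 1" for i
  proof
    show "0 \<le> \<mu> i" unfolding \<mu>_def using assms(3)[OF that]
      by (intro integral_nonneg_AE) (auto elim: eventually_mono)
    have "expectation (X i) \<le> expectation (\<lambda>_. 1::real)"
      using assms(3)[OF that] Xint[OF that] by (intro integral_mono_AE) (auto elim: eventually_mono)
    then show "\<mu> i \<le> 1" by (simp add: \<mu>_def prob_space)
  qed
  have v0: "v 0 = 0" by (simp add: v_def calV_def)
  have mgf: "(\<integral>\<^sup>+\<omega>. ennreal (exp (\<zeta> * X (Suc k) \<omega>)) \<partial>M) \<le> ennreal (exp (v (Suc k) - v k))" for k
  proof -
    define r where "r = \<mu> (Suc k) * exp \<zeta> + 1 - \<mu> (Suc k)"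
    have AEX: "AE \<omega> in M. 0 \<le> X (Suc k) \<omega> \<and> X (Suc k) \<omega> \<le> 1" using assms(3) by simp
    have "(\<integral>\<^sup>+\<omega>. ennreal (exp (\<zeta> * X (Suc k) \<omega>)) \<partial>M)
        \<le> (\<integral>\<^sup>+\<omega>. ennreal (1 + X (Suc k) \<omega> * (exp \<zeta> - 1)) \<partial>M)"
      by (intro nn_integral_mono_AE, use AEX in eventually_elim) (auto intro!: ennreal_leI exp_mix_bound)
    also have "\<dots> = ennreal (\<integral>\<omega>. 1 + X (Suc k) \<omega> * (exp \<zeta> - 1) \<partial>M)"
    proof (rule nn_integral_eq_integral)
      show "integrable M (\<lambda>\<omega>. 1 + X (Suc k) \<omega> * (exp \<zeta> - 1))"
        using Xint[of "Suc k"] by auto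
      show "AE \<omega> in M. 0 \<le> 1 + X (Suc k) \<omega> * (exp \<zeta> - 1)"
        using AEX
      proof eventually_elim
        case (elim \<omega>)
        have "0 < X (Suc k) \<omega> * exp \<zeta> + 1 - X (Suc k) \<omega>" using elim by (intro pos_mix) auto
        then show ?case by (simp add: algebra_simps)
      qed
    qed
    also have "(\<integral>\<omega>. 1 + X (Suc k) \<omega> * (exp \<zeta> - 1) \<partial>M) = r"
      using Xint[of "Suc k"] by (simp add: r_def \<mu>_def algebra_simps prob_space)
    also have "r = exp (ln r)"
      using mu_range[of "Suc k"] pos_mix[of "\<mu> (Suc k)" "exp \<zeta>"] unfolding r_def by (subst exp_ln) auto
    also have "ln r \<le> v (Suc k) - v k"
      using calV_step[of \<mu> \<zeta> k] mu_range unfolding v_def r_def by auto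
    finally show ?thesis by (simp add: ennreal_leI)
  qed
  have c0: "0 < c" by (simp add: c_def)
  define A where "A b N = {\<omega> \<in> space M. tt \<zeta> v b N (\<lambda>i. X i \<omega>)}" for b N
  have Asets: "A b N \<in> sets M" for b N
  proof -
    define R where "R \<omega> = restrict (\<lambda>i. X i \<omega>) {1..N}" for \<omega>
    have Rm: "R \<in> measurable M (PiM {1..N} (\<lambda>_. borel))"
      unfolding R_def using Xm by (intro measurable_restrict) auto
    have "tt \<zeta> v b N (\<lambda>i. X i \<omega>) = tt \<zeta> v b N (R \<omega>)" for \<omega>
      by (rule tt_local) (auto simp: R_def)
    moreover have "Measurable.pred M (\<lambda>\<omega>. tt \<zeta> v b N (R \<omega>))"
      by (rule measurable_compose[OF Rm tt_meas]) auto
    ultimately show ?thesis unfolding A_def pred_def by simp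
  qed
  have main: "\<delta> * measure M E \<le> 1 / c" if d: "0 < \<delta>" "\<delta> < 1" for \<delta>
  proof -
    have AN: "(\<delta> * c) * prob (A (\<delta> * c) N) \<le> 1" for N
      unfolding A_def using d c0 by (intro core[OF ind v0 mgf]) auto
    have sub: "E \<subseteq> (\<Union>N. A (\<delta> * c) N)"
    proof
      fix \<omega> assume "\<omega> \<in> E"
      then have om: "\<omega> \<in> space M"
        and s: "0 \<le> (SUP n\<in>{1..}. ereal (\<zeta> * ((\<Sum>i=1..n. X i \<omega>) - real m * \<theta>) - v n + v m))"
        by (auto simp: E_def)
      have "ereal (ln \<delta>) < 0" using d by auto
      also note s
      finally obtain n where "ereal (ln \<delta>) < ereal (\<zeta> * ((\<Sum>i=1..n. X i \<omega>) - real m * \<theta>) - v n + v m)"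
        by (auto simp: less_SUP_iff)
      then have lt: "ln \<delta> < \<zeta> * ((\<Sum>i=1..n. X i \<omega>) - real m * \<theta>) - v n + v m" by simp
      have "\<delta> * c = exp (ln \<delta> + (\<zeta> * real m * \<theta> - v m))" using d by (simp add: exp_add c_def)
      also have "\<dots> \<le> ww \<zeta> v n (\<lambda>i. X i \<omega>)"
        unfolding ww_def using lt by (simp add: algebra_simps)
      finally have "tt \<zeta> v (\<delta> * c) n (\<lambda>i. X i \<omega>)" unfolding tt_def by auto
      then show "\<omega> \<in> (\<Union>N. A (\<delta> * c) N)" using om by (auto simp: A_def)
    qed
    have "measure M E \<le> measure M (\<Union>N. A (\<delta> * c) N)"
      using sub Asets by (intro finite_measure_mono) auto
    also have "\<dots> \<le> 1 / (\<delta> * c)"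
    proof (rule LIMSEQ_le_const2)
      show "(\<lambda>N. measure M (A (\<delta> * c) N)) \<longlonglongrightarrow> measure M (\<Union>N. A (\<delta> * c) N)"
      proof (rule finite_Lim_measure_incseq)
        show "range (A (\<delta> * c)) \<subseteq> sets M" using Asets by auto
        show "incseq (A (\<delta> * c))"
          by (auto simp: incseq_def A_def tt_def)
      qed
      show "\<exists>N. \<forall>n\<ge>N. measure M (A (\<delta> * c) n) \<le> 1 / (\<delta> * c)"
        using AN d c0 by (auto simp: field_simps mult.commute)
    qed
    finally show ?thesis using d c0 by (simp add: field_simps)
  qed
  have final: "measure M E \<le> 1 / c"
    by (rule field_le_mult_one_interval) (use main in auto)
  have eq: "1 / c = (exp (\<theta> * ln (mb / \<theta>) + (1 - \<theta>) * ln ((1 - mb) / (1 - \<theta>)))) ^ m"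
  proof -
    have pos: "0 < \<theta> * (1 - mb) / (mb * (1 - \<theta>))" using mb0 mb1 th0 th1 by auto
    have ez: "exp \<zeta> = \<theta> * (1 - mb) / (mb * (1 - \<theta>))" unfolding \<zeta>_def using pos by simp
    have q: "mb * exp \<zeta> + 1 - mb = (1 - mb) / (1 - \<theta>)"
      unfolding ez using mb0 th1 by (simp add: field_simps)
    have lz: "\<zeta> = ln \<theta> + ln (1 - mb) - ln mb - ln (1 - \<theta>)"
      unfolding \<zeta>_def using mb0 mb1 th0 th1 by (simp add: ln_div ln_mult)
    have vm: "v m = real m * (ln (1 - mb) - ln (1 - \<theta>))"
      unfolding v_def calV_def mb_def[symmetric] q using mb1 th1 by (simp add: ln_div)
    have "1 / c = exp (v m - \<zeta> * real m * \<theta>)" by (simp add: c_def exp_diff)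
    also have "v m - \<zeta> * real m * \<theta> = real m * (\<theta> * ln (mb / \<theta>) + (1 - \<theta>) * ln ((1 - mb) / (1 - \<theta>)))"
      unfolding vm lz using mb0 mb1 th0 th1 by (simp add: ln_div algebra_simps)
    finally show ?thesis by (simp add: exp_of_nat_mult)
  qed
  show ?thesis
    unfolding Let_def \<mu>_def[symmetric] mb_def[symmetric] \<zeta>_def[symmetric] v_def[symmetric] E_def[symmetric]
    using final eq by simp
qed

end
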